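(* For any $\mathcal A,\mathcal B\in\mathbb Q^{n\times n\times n_3}$, \[0<\rho_{QT}(\mathcal A*_Q\mathcal B)<1\iff 0<\rho_{QT}(\mathcal B*_Q\mathcal A)<1.\]
   Context: $\mathbb Q$ denotes the real quaternions with the usual Hamilton multiplication and $|a|=\sqrt{a_0^2+a_1^2+a_2^2+a_3^2}$; $\mathbb C$ is identified with $\{a_0+a_1\mathbf i\}$. Every quaternion array $A=A_0+A_1\mathbf i+A_2\mathbf j+A_3\mathbf k$ (real $A_t$) is written uniquely as $A=A_{\mathbf d}+\mathbf jA_{\mathbf c}$ with $A_{\mathbf d}=A_0+A_1\mathbf i$, $A_{\mathbf c}=A_2-A_3\mathbf i$. For $\mathcal A\in\mathbb Q^{n_1\times n_2\times n_3}$, $\mathcal A^{(s)}=\mathcal A(:,:,s)$. For a complex tensor $\mathcal C$, $\mathtt{bcirc}(\mathcal C)$ is the block circulant matrix with $(p,q)$ block $\mathcal C^{(((p-q)\bmod n_3)+1)}$. $P_{n_3}$ is the permutation matrix with first row $e_1^T$ and $r$-th row $e_{n_3+2-r}^T$ ($r\ge2$). $\mathtt{bcirc_z}(\mathcal A)=\mathtt{bcirc}(\mathcal A_{\mathbf d})+\mathbf j\,\mathtt{bcirc}(\mathcal A_{\mathbf c})(P_{n_3}\otimes I_{n_2})$. $\mathtt{unfold}(\mathcal B)=[\mathcal B^{(1)};\dots;\mathcal B^{(n_3)}]$, $\mathtt{fold}$ its inverse; QT-product $\mathcal A*_Q\mathcal B=\mathtt{fold}(\mathtt{bcirc_z}(\mathcal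 A)\mathtt{unfold}(\mathcal B))$. A right eigenvalue of a square quaternion matrix $M$ is $\lambda\in\mathbb Q$ with $Mx=x\lambda$ for some $x\neq0$; $\rho(M)$ is the maximum of $|\lambda|$ over right eigenvalues. QT-spectral radius: $\rho_{QT}(\mathcal A)=\rho(\mathtt{bcirc_z}(\mathcal A))$. *)

theory Defs
  imports Complex_Main
begin

datatype quat = Quat (q0: real) (q1: real) (q2: real) (q3: real)

instantiation quat :: ring_1
begin
definition "0 = Quat 0 0 0 0"
definition "1 = Quat 1 0 0 0"
definition "a + b = Quat (q0 a + q0 b) (q1 a + q1 b) (q2 a + q2 b) (q3 a + q3 b)"
definition "- a = Quat (- q0 a) (- q1 a) (- q2 a) (- q3 a)"
definition "a - b = Quat (q0 a - q0 b) (q1 a - q1 b) (q2 a - q2 b) (q3 a - q3 b)"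
definition "a * b = Quat
   (q0 a * q0 b - q1 a * q1 b - q2 a * q2 b - q3 a * q3 b)
   (q0 a * q1 b + q1 a * q0 b + q2 a * q3 b - q3 a * q2 b)
   (q0 a * q2 b - q1 a * q3 b + q2 a * q0 b + q3 a * q1 b)
   (q0 a * q3 b + q1 a * q2 b - q2 a * q1 b + q3 a * q0 b)"
instance
  by standard (simp_all add: zero_quat_def one_quat_def plus_quat_def uminus_quat_def
      minus_quat_def times_quat_def algebra_simps)
end

definition qnorm :: "quat \<Rightarrow> real" where
  "qnorm a = sqrt ((q0 a)\<^sup>2 + (q1 a)\<^sup>2 + (q2 a)\<^sup>2 + (q3 a)\<^sup>2)"

definition qj :: quat where "qj = Quat 0 0 1 0"

definition of_cplx :: "complex \<Rightarrow> quat" where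
  "of_cplx z = Quat (Re z) (Im z) 0 0"

text \<open>Complex parts: A = A_d + j A_c, A_d = A0 + A1 i, A_c = A2 - A3 i.\<close>
definition qpart_d :: "quat \<Rightarrow> complex" where "qpart_d a = Complex (q0 a) (q1 a)"
definition qpart_c :: "quat \<Rightarrow> complex" where "qpart_c a = Complex (q2 a) (- q3 a)"

section \<open>Matrices and tensors (0-based indices, explicit dimensions)\<close>

type_synonym 'a mat = "nat \<Rightarrow> nat \<Rightarrow> 'a"
type_synonym 'a tensor = "nat \<Rightarrow> nat \<Rightarrow> nat \<Rightarrow> 'a"

definition mat_mult :: "nat \<Rightarrow> 'a::semiring_0 mat \<Rightarrow> 'a mat \<Rightarrow> 'a mat" where
  "mat_mult k M N = (\<lambda>i j. \<Sum>l<k. M i l * N l j)"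

definition mat_id :: "nat \<Rightarrow> 'a::zero_neq_one mat" where
  "mat_id m = (\<lambda>i j. if i = j then 1 else 0)"

definition kron :: "nat \<Rightarrow> nat \<Rightarrow> 'a::times mat \<Rightarrow> 'a mat \<Rightarrow> 'a mat" where
  "kron p1 p2 M N = (\<lambda>i j. M (i div p1) (j div p2) * N (i mod p1) (j mod p2))"

text \<open>P_{n3}: first row e_1, r-th row e_{n3+2-r} (1-based); 0-based: row r is e_{(n3-r) mod n3}.\<close>
definition perm_P :: "nat \<Rightarrow> 'a::zero_neq_one mat" where
  "perm_P n3 = (\<lambda>r c. if c = (n3 - r) mod n3 then 1 else 0)"

text \<open>Block circulant matrix of an (n1 x n2 x n3) tensor; block (p,q) is C(:,:,(p-q) mod n3).\<close>
definition bcirc :: "nat \<Rightarrow> nat \<Rightarrow> nat \<Rightarrow> 'a tensor \<Rightarrow> 'a mat" where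
  "bcirc n1 n2 n3 C = (\<lambda>i j. C (i mod n1) (j mod n2) ((i div n1 + n3 - j div n2) mod n3))"

definition bcirc_z :: "nat \<Rightarrow> nat \<Rightarrow> nat \<Rightarrow> quat tensor \<Rightarrow> quat mat" where
  "bcirc_z n1 n2 n3 A =
     (let Ad = (\<lambda>a b s. qpart_d (A a b s));
          Ac = (\<lambda>a b s. qpart_c (A a b s));
          R = mat_mult (n2 * n3) (bcirc n1 n2 n3 Ac) (kron n2 n2 (perm_P n3) (mat_id n2))
      in (\<lambda>i j. of_cplx (bcirc n1 n2 n3 Ad i j) + qj * of_cplx (R i j)))"

definition unfold_t :: "nat \<Rightarrow> 'a tensor \<Rightarrow> 'a mat" where
  "unfold_t n1 B = (\<lambda>i j. B (i mod n1) j (i div n1))"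

definition fold_t :: "nat \<Rightarrow> 'a mat \<Rightarrow> 'a tensor" where
  "fold_t n1 M = (\<lambda>a b s. M (s * n1 + a) b)"

definition qt_prod :: "nat \<Rightarrow> nat \<Rightarrow> nat \<Rightarrow> quat tensor \<Rightarrow> quat tensor \<Rightarrow> quat tensor" where
  "qt_prod n1 n2 n3 A B = fold_t n1 (mat_mult (n2 * n3) (bcirc_z n1 n2 n3 A) (unfold_t n2 B))"

definition right_eigenvalue :: "nat \<Rightarrow> quat mat \<Rightarrow> quat \<Rightarrow> bool" where
  "right_eigenvalue m M lam \<longleftrightarrow>
     (\<exists>x :: nat \<Rightarrow> quat. (\<exists>i<m. x i \<noteq> 0) \<and> (\<forall>i<m. (\<Sum>l<m. M i l * x l) = x i * lam))"

text \<open>Maximum modulus of the right eigenvalues (the maximum exists; Sup coincides with it).\<close>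
definition spec_radius :: "nat \<Rightarrow> quat mat \<Rightarrow> real" where
  "spec_radius m M = Sup (qnorm ` {lam. right_eigenvalue m M lam})"

definition rho_QT :: "nat \<Rightarrow> nat \<Rightarrow> quat tensor \<Rightarrow> real" where
  "rho_QT n n3 A = spec_radius (n * n3) (bcirc_z n n n3 A)"

end

theory Submission
  imports Defs "Jordan_Normal_Form.Spectral_Radius"
begin

lemma quat_eq_parts: "(x::quat) = y \<longleftrightarrow> qpart_d x = qpart_d y \<and> qpart_c x = qpart_c y"
  by (cases x; cases y) (auto simp: qpart_d_def qpart_c_def)

lemma qpart_d_mult: "qpart_d (x*y) = qpart_d x * qpart_d y - cnj (qpart_c x) * qpart_c y"
  by (simp add: qpart_d_def qpart_c_def times_quat_def complex_eq_iff)
lemma qpart_c_mult: "qpart_c (x*y) = cnj (qpart_d x) * qpart_c y + qpart_c x * qpart_d y"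
  by (simp add: qpart_d_def qpart_c_def times_quat_def complex_eq_iff algebra_simps)
lemma qpart_d_add: "qpart_d (x+y) = qpart_d x + qpart_d y"
  by (simp add: qpart_d_def plus_quat_def complex_eq_iff)
lemma qpart_c_add: "qpart_c (x+y) = qpart_c x + qpart_c y"
  by (simp add: qpart_c_def plus_quat_def complex_eq_iff)
lemma qpart_d_zero[simp]: "qpart_d 0 = 0"
  by (simp add: qpart_d_def zero_quat_def complex_eq_iff)
lemma qpart_c_zero[simp]: "qpart_c 0 = 0"
  by (simp add: qpart_c_def zero_quat_def complex_eq_iff)
lemma qpart_d_sum: "qpart_d (sum f S) = (\<Sum>x\<in>S. qpart_d (f x))"
  by (induction S rule: infinite_finite_induct) (auto simp: qpart_d_add)
lemma qpart_c_sum: "qpart_c (sum f S) = (\<Sum>x\<in>S. qpart_c (f x))"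
  by (induction S rule: infinite_finite_induct) (auto simp: qpart_c_add)

definition mkq :: "complex \<Rightarrow> complex \<Rightarrow> quat" where
  "mkq z w = of_cplx z + qj * of_cplx w"
lemma qpart_d_mkq[simp]: "qpart_d (mkq z w) = z"
  by (simp add: mkq_def qpart_d_def of_cplx_def qj_def times_quat_def plus_quat_def complex_eq_iff)
lemma qpart_c_mkq[simp]: "qpart_c (mkq z w) = w"
  by (simp add: mkq_def qpart_c_def of_cplx_def qj_def times_quat_def plus_quat_def complex_eq_iff)
lemma qpart_d_of_cplx[simp]: "qpart_d (of_cplx z) = z"
  by (simp add: qpart_d_def of_cplx_def complex_eq_iff)
lemma qpart_c_of_cplx[simp]: "qpart_c (of_cplx z) = 0"
  by (simp add: qpart_c_def of_cplx_def complex_eq_iff)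

lemma quat_no_zero_div: "(x::quat) * y = 0 \<Longrightarrow> x = 0 \<or> y = 0"
proof -
  assume h: "x * y = 0"
  have "(q0 (x*y))^2 + (q1 (x*y))^2 + (q2 (x*y))^2 + (q3 (x*y))^2
     = ((q0 x)^2 + (q1 x)^2 + (q2 x)^2 + (q3 x)^2) * ((q0 y)^2 + (q1 y)^2 + (q2 y)^2 + (q3 y)^2)"
    by (simp add: times_quat_def power2_eq_square algebra_simps)
  hence "((q0 x)^2 + (q1 x)^2 + (q2 x)^2 + (q3 x)^2) * ((q0 y)^2 + (q1 y)^2 + (q2 y)^2 + (q3 y)^2) = 0"
    using h by (simp add: zero_quat_def)
  hence "(q0 x)^2 + (q1 x)^2 + (q2 x)^2 + (q3 x)^2 = 0 \<or> (q0 y)^2 + (q1 y)^2 + (q2 y)^2 + (q3 y)^2 = 0"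
    by simp
  thus ?thesis
    by (cases x; cases y) (auto simp: zero_quat_def add_nonneg_eq_0_iff)
qed

lemma bcirc_z_entry:
  assumes "0 < n2" "0 < n3" "j < n2 * n3"
  shows "bcirc_z n1 n2 n3 A i j = mkq (qpart_d (A (i mod n1) (j mod n2) ((i div n1 + n3 - j div n2) mod n3)))
             (qpart_c (A (i mod n1) (j mod n2) ((i div n1 + j div n2) mod n3)))"
proof -
  define jb where "jb = j div n2"
  have jb: "jb < n3" using assms by (simp add: jb_def less_mult_imp_div_less mult.commute)
  define l0 where "l0 = ((n3 - jb) mod n3) * n2 + j mod n2"
  have l0: "l0 < n2 * n3"
  proof -
    have "(n3 - jb) mod n3 < n3" using assms by simp
    hence "(n3 - jb) mod n3 + 1 \<le> n3" by simp
    hence "((n3 - jb) mod n3 + 1) * n2 \<le> n3 * n2" by (rule mult_right_mono) simp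
    moreover have "j mod n2 < n2" using assms by simp
    ultimately show ?thesis unfolding l0_def by (simp add: algebra_simps)
  qed
  have l0d: "l0 div n2 = (n3 - jb) mod n3" "l0 mod n2 = j mod n2" using assms by (simp_all add: l0_def)
  let ?Ac = "\<lambda>a b s. qpart_c (A a b s)"
  have tm: "bcirc n1 n2 n3 ?Ac i l * kron n2 n2 (perm_P n3) (mat_id n2) l j
      = (if l = l0 then bcirc n1 n2 n3 ?Ac i l else 0)" if l: "l < n2 * n3" for l
  proof -
    have lb: "l div n2 < n3" using l assms by (simp add: less_mult_imp_div_less mult.commute)
    have c1: "(jb = (n3 - l div n2) mod n3) \<longleftrightarrow> (l div n2 = (n3 - jb) mod n3)"
      using lb jb assms
      by (cases "l div n2 = 0"; cases "jb = 0") (auto simp: mod_if)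
    have c2: "l = l0 \<longleftrightarrow> l div n2 = l0 div n2 \<and> l mod n2 = l0 mod n2"
      by (metis div_mult_mod_eq)
    show ?thesis using c1 c2 l0d
      by (auto simp: kron_def perm_P_def mat_id_def jb_def)
  qed
  have "mat_mult (n2 * n3) (bcirc n1 n2 n3 ?Ac) (kron n2 n2 (perm_P n3) (mat_id n2)) i j
     = bcirc n1 n2 n3 ?Ac i l0"
    unfolding mat_mult_def
  proof -
    have "(\<Sum>l<n2*n3. bcirc n1 n2 n3 ?Ac i l * kron n2 n2 (perm_P n3) (mat_id n2) l j)
       = (\<Sum>l<n2*n3. if l = l0 then bcirc n1 n2 n3 ?Ac i l else 0)"
      by (rule sum.cong) (simp_all add: tm)
    also have "\<dots> = bcirc n1 n2 n3 ?Ac i l0" using l0 by (simp add: sum.delta')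
    finally show "(\<Sum>l<n2*n3. bcirc n1 n2 n3 ?Ac i l * kron n2 n2 (perm_P n3) (mat_id n2) l j) = bcirc n1 n2 n3 ?Ac i l0" .
  qed
  also have "\<dots> = ?Ac (i mod n1) (j mod n2) ((i div n1 + jb) mod n3)"
  proof -
    have e: "(i div n1 + n3 - (n3 - jb) mod n3) mod n3 = (i div n1 + jb) mod n3"
    proof (cases "jb = 0")
      case True thus ?thesis by simp
    next
      case False
      hence "(n3 - jb) mod n3 = n3 - jb" using jb by simp
      moreover have "i div n1 + n3 - (n3 - jb) = i div n1 + jb" using jb by simp
      ultimately show ?thesis by simp
    qed
    show ?thesis unfolding bcirc_def l0d e ..
  qed
  finally have R: "mat_mult (n2 * n3) (bcirc n1 n2 n3 ?Ac) (kron n2 n2 (perm_P n3) (mat_id n2)) i j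
     = ?Ac (i mod n1) (j mod n2) ((i div n1 + jb) mod n3)" .
  show ?thesis
    unfolding bcirc_z_def Let_def mkq_def R unfolding jb_def bcirc_def ..
qed

definition idx :: "nat \<Rightarrow> int \<Rightarrow> nat" where "idx m x = nat (x mod int m)"

lemma int_idx: "0 < m \<Longrightarrow> int (idx m x) = x mod int m"
  by (simp add: idx_def)
lemma idx_lt: "0 < m \<Longrightarrow> idx m x < m"
  by (simp add: idx_def nat_less_iff)
lemma idx_id: "l < m \<Longrightarrow> idx m (int l) = l"
  by (simp add: idx_def)
lemma idx_addL: "0 < m \<Longrightarrow> idx m (int (idx m x) + y) = idx m (x + y)"
  by (simp add: idx_def mod_simps)
lemma idx_addR: "0 < m \<Longrightarrow> idx m (y + int (idx m x)) = idx m (y + x)"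
  by (simp add: idx_def mod_simps)
lemma idx_diffL: "0 < m \<Longrightarrow> idx m (int (idx m x) - y) = idx m (x - y)"
  by (simp add: idx_def mod_simps)
lemma idx_diffR: "0 < m \<Longrightarrow> idx m (y - int (idx m x)) = idx m (y - x)"
  by (simp add: idx_def mod_simps)
lemmas idx_simps = idx_addL idx_addR idx_diffL idx_diffR

lemma conv1: "lb < m \<Longrightarrow> (x + m - lb) mod m = idx m (int x - int lb)"
proof -
  assume lb: "lb < m"
  have "int ((x + m - lb) mod m) = (int x + int m - int lb) mod int m"
    using lb by (simp add: zmod_int of_nat_diff)
  also have "\<dots> = ((int x - int lb) + int m) mod int m" by (simp add: algebra_simps)
  also have "\<dots> = (int x - int lb) mod int m" by (rule mod_add_self2)
  finally show ?thesis unfolding idx_def by linarith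
qed
lemma conv2: "(x + y) mod m = idx m (int x + int y)"
  unfolding idx_def by (simp add: zmod_int[symmetric] del: of_nat_add add: of_nat_add[symmetric])

lemma shift_sum: assumes "0 < m" shows "(\<Sum>l<m. G (idx m (int l + k))) = (\<Sum>l<m. G l)"
proof -
  have "bij_betw (\<lambda>l. idx m (int l + k)) {..<m} {..<m}"
  proof (rule bij_betw_byWitness[where f' = "\<lambda>l. idx m (int l - k)"])
    show "\<forall>a\<in>{..<m}. idx m (int (idx m (int a + k)) - k) = a"
      using assms by (simp add: idx_diffL idx_id)
    show "\<forall>a'\<in>{..<m}. idx m (int (idx m (int a' - k)) + k) = a'"
      using assms by (simp add: idx_addL idx_id)
  qed (use assms idx_lt in auto)
  thus ?thesis by (rule sum.reindex_bij_betw)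
qed

lemma split_sum: fixes f :: "nat \<Rightarrow> 'a::comm_monoid_add" shows "(\<Sum>l<n*m. f l) = (\<Sum>lb<m. \<Sum>c<n. f (lb*n + c))"
proof -
  have "(\<Sum>l<m*n. f l) = (\<Sum>lb<m. sum f {lb*n..<lb*n+n})"
    using sum.nat_group[of f n m] by simp
  also have "\<dots> = (\<Sum>lb<m. \<Sum>c<n. f (lb*n + c))"
  proof (rule sum.cong[OF refl])
    fix lb
    show "sum f {lb*n..<lb*n+n} = (\<Sum>c<n. f (lb*n + c))"
      using sum.shift_bounds_nat_ivl[of f 0 "lb*n" n]
      by (simp add: add.commute lessThan_atLeast0)
  qed
  finally show ?thesis by (simp add: mult.commute)
qed

lemma shiftD:
  fixes f g p q :: "nat \<Rightarrow> complex"
  assumes m: "0 < m"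
  shows "(\<Sum>lb<m. f (idx m (int ib - int lb)) * g (idx m (int lb - int jb))
            - cnj (p (idx m (int ib + int lb))) * q (idx m (int lb + int jb)))
       = (\<Sum>lb<m. f (idx m (int (idx m (int ib - int jb)) - int lb)) * g lb
            - cnj (p (idx m (int (idx m (int ib - int jb)) + int lb))) * q lb)"
proof -
  let ?F1 = "\<lambda>lb. f (idx m (int ib - int lb)) * g (idx m (int lb - int jb))"
  let ?F2 = "\<lambda>lb. cnj (p (idx m (int ib + int lb))) * q (idx m (int lb + int jb))"
  have 1: "(\<Sum>lb<m. ?F1 lb) = (\<Sum>lb<m. f (idx m (int (idx m (int ib - int jb)) - int lb)) * g lb)"
  proof -
    have "(\<Sum>lb<m. ?F1 lb) = (\<Sum>lb<m. ?F1 (idx m (int lb + int jb)))"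
      using shift_sum[OF m, of ?F1 "int jb"] by simp
    also have "\<dots> = (\<Sum>lb<m. f (idx m (int (idx m (int ib - int jb)) - int lb)) * g lb)"
      by (rule sum.cong[OF refl]) (simp add: m idx_simps idx_id algebra_simps)
    finally show ?thesis .
  qed
  have 2: "(\<Sum>lb<m. ?F2 lb) = (\<Sum>lb<m. cnj (p (idx m (int (idx m (int ib - int jb)) + int lb))) * q lb)"
  proof -
    have "(\<Sum>lb<m. ?F2 lb) = (\<Sum>lb<m. ?F2 (idx m (int lb - int jb)))"
      using shift_sum[OF m, of ?F2 "- int jb"] by simp
    also have "\<dots> = (\<Sum>lb<m. cnj (p (idx m (int (idx m (int ib - int jb)) + int lb))) * q lb)"
      by (rule sum.cong[OF refl]) (simp add: m idx_simps idx_id algebra_simps)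
    finally show ?thesis .
  qed
  show ?thesis using 1 2 by (simp add: sum_subtractf)
qed

lemma shiftC:
  fixes f g p q :: "nat \<Rightarrow> complex"
  assumes m: "0 < m"
  shows "(\<Sum>lb<m. cnj (f (idx m (int ib - int lb))) * q (idx m (int lb + int jb))
            + p (idx m (int ib + int lb)) * g (idx m (int lb - int jb)))
       = (\<Sum>lb<m. cnj (f (idx m (int (idx m (int ib + int jb)) - int lb))) * q lb
            + p (idx m (int (idx m (int ib + int jb)) + int lb)) * g lb)"
proof -
  let ?F1 = "\<lambda>lb. cnj (f (idx m (int ib - int lb))) * q (idx m (int lb + int jb))"
  let ?F2 = "\<lambda>lb. p (idx m (int ib + int lb)) * g (idx m (int lb - int jb))"
  have 1: "(\<Sum>lb<m. ?F1 lb) = (\<Sum>lb<m. cnj (f (idx m (int (idx m (int ib + int jb)) - int lb))) * q lb)"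
  proof -
    have "(\<Sum>lb<m. ?F1 lb) = (\<Sum>lb<m. ?F1 (idx m (int lb - int jb)))"
      using shift_sum[OF m, of ?F1 "- int jb"] by simp
    also have "\<dots> = (\<Sum>lb<m. cnj (f (idx m (int (idx m (int ib + int jb)) - int lb))) * q lb)"
      by (rule sum.cong[OF refl]) (simp add: m idx_simps idx_id algebra_simps)
    finally show ?thesis .
  qed
  have 2: "(\<Sum>lb<m. ?F2 lb) = (\<Sum>lb<m. p (idx m (int (idx m (int ib + int jb)) + int lb)) * g lb)"
  proof -
    have "(\<Sum>lb<m. ?F2 lb) = (\<Sum>lb<m. ?F2 (idx m (int lb + int jb)))"
      using shift_sum[OF m, of ?F2 "int jb"] by simp
    also have "\<dots> = (\<Sum>lb<m. p (idx m (int (idx m (int ib + int jb)) + int lb)) * g lb)"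
      by (rule sum.cong[OF refl]) (simp add: m idx_simps idx_id algebra_simps)
    finally show ?thesis .
  qed
  show ?thesis using 1 2 by (simp add: sum.distrib)
qed

lemma MI:
  assumes n: "0 < n" and n3: "0 < n3" and i: "i < n * n3" and j: "j < n * n3"
  shows "mat_mult (n*n3) (bcirc_z n n n3 A) (bcirc_z n n n3 B) i j = bcirc_z n n n3 (qt_prod n n n3 A B) i j"
proof -
  define a where "a = i mod n"
  define ib where "ib = i div n"
  define b where "b = j mod n"
  define jb where "jb = j div n"
  have a: "a < n" and b: "b < n" using n by (simp_all add: a_def b_def)
  have ii: "i = ib * n + a" and jj: "j = jb * n + b" by (simp_all add: a_def ib_def b_def jb_def)
  have lnn: "lb * n + c < n * n3" if "lb < n3" "c < n" for lb c
  proof -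
    have "lb * n + c < lb * n + n" using that by simp
    also have "\<dots> = (lb + 1) * n" by simp
    also have "\<dots> \<le> n3 * n" using that by (intro mult_right_mono) simp_all
    finally show ?thesis by (simp add: mult.commute)
  qed
  have entA: "bcirc_z n n n3 A (s*n+a) (lb*n+c) = mkq (qpart_d (A a c (idx n3 (int s - int lb))))
      (qpart_c (A a c (idx n3 (int s + int lb))))" if "lb < n3" "c < n" for s lb c
  proof -
    have e: "(s*n+a) mod n = a" "(s*n+a) div n = s" "(lb*n+c) mod n = c" "(lb*n+c) div n = lb"
      using that a n by simp_all
    show ?thesis
      using bcirc_z_entry[OF n n3 lnn[OF that], of n A "s*n+a"] that
      unfolding e by (simp add: conv1 conv2)
  qed
  have entB: "bcirc_z n n n3 B (lb*n+c) j = mkq (qpart_d (B c b (idx n3 (int lb - int jb))))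
      (qpart_c (B c b (idx n3 (int lb + int jb))))" if "lb < n3" "c < n" for lb c
  proof -
    have "jb < n3" using j n by (simp add: jb_def less_mult_imp_div_less mult.commute)
    moreover have e: "(lb*n+c) mod n = c" "(lb*n+c) div n = lb"
      using that n by simp_all
    ultimately show ?thesis
      using bcirc_z_entry[OF n n3 j, of n B "lb*n+c"] that
      unfolding e b_def[symmetric] jb_def[symmetric] by (simp add: conv1 conv2)
  qed
  define C where "C = qt_prod n n n3 A B"
  have Cab: "C a b s = (\<Sum>lb<n3. \<Sum>c<n. bcirc_z n n n3 A (s*n+a) (lb*n+c) * B c b lb)" for s
  proof -
    have "C a b s = (\<Sum>l<n*n3. bcirc_z n n n3 A (s*n+a) l * B (l mod n) b (l div n))"
      by (simp add: C_def qt_prod_def fold_t_def mat_mult_def unfold_t_def)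
    also have "\<dots> = (\<Sum>lb<n3. \<Sum>c<n. bcirc_z n n n3 A (s*n+a) (lb*n+c) * B ((lb*n+c) mod n) b ((lb*n+c) div n))"
      by (rule split_sum)
    also have "\<dots> = (\<Sum>lb<n3. \<Sum>c<n. bcirc_z n n n3 A (s*n+a) (lb*n+c) * B c b lb)"
      by (intro sum.cong refl) simp
    finally show ?thesis .
  qed
  have RHS: "bcirc_z n n n3 C i j = mkq (qpart_d (C a b (idx n3 (int ib - int jb)))) (qpart_c (C a b (idx n3 (int ib + int jb))))"
  proof -
    have "jb < n3" using j n by (simp add: jb_def less_mult_imp_div_less mult.commute)
    thus ?thesis
      using bcirc_z_entry[OF n n3 j, of n C i] by (simp add: conv1 conv2 a_def b_def ib_def jb_def)
  qed
  have LHS: "mat_mult (n*n3) (bcirc_z n n n3 A) (bcirc_z n n n3 B) i j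
     = (\<Sum>lb<n3. \<Sum>c<n. bcirc_z n n n3 A (ib*n+a) (lb*n+c) * bcirc_z n n n3 B (lb*n+c) j)"
    unfolding mat_mult_def ii[symmetric] by (rule split_sum)
  let ?dA = "\<lambda>c t. qpart_d (A a c t)" and ?cA = "\<lambda>c t. qpart_c (A a c t)"
  let ?dB = "\<lambda>c t. qpart_d (B c b t)" and ?cB = "\<lambda>c t. qpart_c (B c b t)"
  have Dpart: "qpart_d (mat_mult (n*n3) (bcirc_z n n n3 A) (bcirc_z n n n3 B) i j) = qpart_d (bcirc_z n n n3 C i j)"
  proof -
    have "qpart_d (mat_mult (n*n3) (bcirc_z n n n3 A) (bcirc_z n n n3 B) i j)
       = (\<Sum>lb<n3. \<Sum>c<n. ?dA c (idx n3 (int ib - int lb)) * ?dB c (idx n3 (int lb - int jb))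
            - cnj (?cA c (idx n3 (int ib + int lb))) * ?cB c (idx n3 (int lb + int jb)))"
      unfolding LHS qpart_d_sum by (intro sum.cong refl) (simp add: entA entB qpart_d_mult)
    also have "\<dots> = (\<Sum>c<n. \<Sum>lb<n3. ?dA c (idx n3 (int ib - int lb)) * ?dB c (idx n3 (int lb - int jb))
            - cnj (?cA c (idx n3 (int ib + int lb))) * ?cB c (idx n3 (int lb + int jb)))"
      by (rule sum.swap)
    also have "\<dots> = (\<Sum>c<n. \<Sum>lb<n3. ?dA c (idx n3 (int (idx n3 (int ib - int jb)) - int lb)) * ?dB c lb
            - cnj (?cA c (idx n3 (int (idx n3 (int ib - int jb)) + int lb))) * ?cB c lb)"
      by (intro sum.cong refl shiftD n3)
    also have "\<dots> = (\<Sum>lb<n3. \<Sum>c<n. ?dA c (idx n3 (int (idx n3 (int ib - int jb)) - int lb)) * ?dB c lb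
            - cnj (?cA c (idx n3 (int (idx n3 (int ib - int jb)) + int lb))) * ?cB c lb)"
      by (rule sum.swap)
    also have "\<dots> = qpart_d (bcirc_z n n n3 C i j)"
      unfolding RHS qpart_d_mkq Cab qpart_d_sum by (intro sum.cong refl) (simp add: entA qpart_d_mult)
    finally show ?thesis .
  qed
  have Cpart: "qpart_c (mat_mult (n*n3) (bcirc_z n n n3 A) (bcirc_z n n n3 B) i j) = qpart_c (bcirc_z n n n3 C i j)"
  proof -
    have "qpart_c (mat_mult (n*n3) (bcirc_z n n n3 A) (bcirc_z n n n3 B) i j)
       = (\<Sum>lb<n3. \<Sum>c<n. cnj (?dA c (idx n3 (int ib - int lb))) * ?cB c (idx n3 (int lb + int jb))
            + ?cA c (idx n3 (int ib + int lb)) * ?dB c (idx n3 (int lb - int jb)))"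
      unfolding LHS qpart_c_sum by (intro sum.cong refl) (simp add: entA entB qpart_c_mult)
    also have "\<dots> = (\<Sum>c<n. \<Sum>lb<n3. cnj (?dA c (idx n3 (int ib - int lb))) * ?cB c (idx n3 (int lb + int jb))
            + ?cA c (idx n3 (int ib + int lb)) * ?dB c (idx n3 (int lb - int jb)))"
      by (rule sum.swap)
    also have "\<dots> = (\<Sum>c<n. \<Sum>lb<n3. cnj (?dA c (idx n3 (int (idx n3 (int ib + int jb)) - int lb))) * ?cB c lb
            + ?cA c (idx n3 (int (idx n3 (int ib + int jb)) + int lb)) * ?dB c lb)"
      by (intro sum.cong refl shiftC n3)
    also have "\<dots> = (\<Sum>lb<n3. \<Sum>c<n. cnj (?dA c (idx n3 (int (idx n3 (int ib + int jb)) - int lb))) * ?cB c lb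
            + ?cA c (idx n3 (int (idx n3 (int ib + int jb)) + int lb)) * ?dB c lb)"
      by (rule sum.swap)
    also have "\<dots> = qpart_c (bcirc_z n n n3 C i j)"
      unfolding RHS qpart_c_mkq Cab qpart_c_sum by (intro sum.cong refl) (simp add: entA qpart_c_mult)
    finally show ?thesis .
  qed
  show ?thesis using Dpart Cpart quat_eq_parts C_def by blast
qed

lemma sum_double: fixes f :: "nat \<Rightarrow> 'a::comm_monoid_add"
  shows "(\<Sum>t<2*m. f t) = (\<Sum>l<m. f l) + (\<Sum>l<m. f (l + m))"
proof -
  have "(\<Sum>t<m*2. f t) = (\<Sum>lb<2. \<Sum>c<m. f (lb*m + c))" by (rule split_sum)
  thus ?thesis by (simp add: numeral_2_eq_2 mult.commute add.commute)
qed

lemma eig_exists: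
  assumes m: "0 < m"
  shows "\<exists>lam. right_eigenvalue m M lam"
proof -
  define CM :: "complex Matrix.mat" where "CM = Matrix.mat (2*m) (2*m) (\<lambda>(i,t).
     if i < m then (if t < m then qpart_d (M i t) else - cnj (qpart_c (M i (t - m))))
     else (if t < m then qpart_c (M (i - m) t) else cnj (qpart_d (M (i - m) (t - m)))))"
  have CMc: "CM \<in> carrier_mat (2*m) (2*m)" by (simp add: CM_def)
  from spectrum_non_empty[OF CMc] m obtain k where "k \<in> spectrum CM" by auto
  hence "eigenvalue CM k" by (simp add: spectrum_def)
  then obtain v where v: "v \<in> carrier_vec (2*m)" "v \<noteq> 0\<^sub>v (2*m)" "CM *\<^sub>v v = k \<cdot>\<^sub>v v"
    unfolding eigenvalue_def eigenvector_def using CMc by auto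
  define x where "x = (\<lambda>l. mkq (v $ l) (v $ (l + m)))"
  have row: "(\<Sum>t<2*m. CM $$ (i,t) * v $ t) = k * v $ i" if "i < 2*m" for i
  proof -
    have "(CM *\<^sub>v v) $ i = (k \<cdot>\<^sub>v v) $ i" using v(3) by simp
    thus ?thesis using that v(1) CMc
      by (simp add: scalar_prod_def atLeast0LessThan)
  qed
  have nz: "\<exists>i<m. x i \<noteq> 0"
  proof -
    from v(1,2) obtain t where t: "t < 2*m" "v $ t \<noteq> 0"
      by (metis carrier_vecD index_zero_vec(1) eq_vecI index_zero_vec(2))
    show ?thesis
    proof (cases "t < m")
      case True
      hence "qpart_d (x t) \<noteq> 0" using t by (simp add: x_def)
      thus ?thesis using True by (metis qpart_d_zero)
    next
      case False
      hence "qpart_c (x (t - m)) \<noteq> 0" using t by (simp add: x_def)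
      moreover have "t - m < m" using t False by simp
      ultimately show ?thesis by (metis qpart_c_zero)
    qed
  qed
  have eq: "(\<Sum>l<m. M i l * x l) = x i * of_cplx k" if i: "i < m" for i
  proof -
    have d: "(\<Sum>l<m. qpart_d (M i l) * v $ l - cnj (qpart_c (M i l)) * v $ (l + m)) = v $ i * k"
    proof -
      have "k * v $ i = (\<Sum>t<2*m. CM $$ (i,t) * v $ t)" using row[of i] i by simp
      also have "\<dots> = (\<Sum>l<m. CM $$ (i,l) * v $ l) + (\<Sum>l<m. CM $$ (i,l+m) * v $ (l+m))"
        by (rule sum_double)
      also have "\<dots> = (\<Sum>l<m. qpart_d (M i l) * v $ l - cnj (qpart_c (M i l)) * v $ (l + m))"
        using i by (simp add: CM_def sum_subtractf sum.distrib sum_negf)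
      finally show ?thesis by (simp add: mult.commute)
    qed
    have c: "(\<Sum>l<m. cnj (qpart_d (M i l)) * v $ (l + m) + qpart_c (M i l) * v $ l) = v $ (i + m) * k"
    proof -
      have "k * v $ (i+m) = (\<Sum>t<2*m. CM $$ (i+m,t) * v $ t)" using row[of "i+m"] i by simp
      also have "\<dots> = (\<Sum>l<m. CM $$ (i+m,l) * v $ l) + (\<Sum>l<m. CM $$ (i+m,l+m) * v $ (l+m))"
        by (rule sum_double)
      also have "\<dots> = (\<Sum>l<m. cnj (qpart_d (M i l)) * v $ (l + m) + qpart_c (M i l) * v $ l)"
        using i by (simp add: CM_def sum.distrib)
      finally show ?thesis by (simp add: mult.commute)
    qed
    show ?thesis
      unfolding quat_eq_parts qpart_d_sum qpart_c_sum qpart_d_mult qpart_c_mult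
      using d c by (simp add: x_def)
  qed
  show ?thesis unfolding right_eigenvalue_def using nz eq by blast
qed

lemma mm_apply: "(\<Sum>l<m. mat_mult m P Q i l * z l) = (\<Sum>q<m. P i q * (\<Sum>l<m. Q q l * z l))"
proof -
  have "(\<Sum>l<m. mat_mult m P Q i l * z l) = (\<Sum>l<m. \<Sum>q<m. P i q * (Q q l * z l))"
    by (simp add: mat_mult_def sum_distrib_right mult.assoc)
  also have "\<dots> = (\<Sum>q<m. \<Sum>l<m. P i q * (Q q l * z l))" by (rule sum.swap)
  also have "\<dots> = (\<Sum>q<m. P i q * (\<Sum>l<m. Q q l * z l))" by (simp add: sum_distrib_left)
  finally show ?thesis .
qed

lemma eig_swap:
  assumes lam: "lam \<noteq> 0" and e: "right_eigenvalue m (mat_mult m M N) lam"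
  shows "right_eigenvalue m (mat_mult m N M) lam"
proof -
  from e obtain x where x: "\<exists>i<m. x i \<noteq> 0" "\<forall>i<m. (\<Sum>l<m. mat_mult m M N i l * x l) = x i * lam"
    unfolding right_eigenvalue_def by blast
  define y where "y = (\<lambda>k. \<Sum>p<m. N k p * x p)"
  have My: "(\<Sum>q<m. M i q * y q) = x i * lam" if "i < m" for i
    using x(2) that mm_apply[of m M N i x] by (simp add: y_def)
  have ynz: "\<exists>i<m. y i \<noteq> 0"
  proof (rule ccontr)
    assume "\<not> ?thesis"
    hence "\<forall>i<m. x i * lam = 0" using My by simp
    thus False using x(1) lam quat_no_zero_div by blast
  qed
  have "(\<Sum>l<m. mat_mult m N M i l * y l) = y i * lam" if "i < m" for i
  proof -
    have "(\<Sum>l<m. mat_mult m N M i l * y l) = (\<Sum>q<m. N i q * (\<Sum>l<m. M q l * y l))"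
      by (rule mm_apply)
    also have "\<dots> = (\<Sum>q<m. N i q * (x q * lam))" using My by simp
    also have "\<dots> = y i * lam" by (simp add: y_def sum_distrib_right mult.assoc)
    finally show ?thesis .
  qed
  thus ?thesis unfolding right_eigenvalue_def using ynz by blast
qed

lemma eig_cong:
  assumes "\<And>i l. i < m \<Longrightarrow> l < m \<Longrightarrow> M i l = N i l"
  shows "right_eigenvalue m M lam = right_eigenvalue m N lam"
proof -
  have h: "(\<Sum>l<m. M i l * x l) = (\<Sum>l<m. N i l * x l)" if "i < m" for i x
    using assms that by (intro sum.cong) auto
  show ?thesis unfolding right_eigenvalue_def by (simp add: h)
qed

lemma sup_lemma:
  fixes S T :: "real set"
  assumes "S \<noteq> {}" "T \<noteq> {}" "S - {0} = T - {0}" "\<forall>x\<in>S \<union> T. 0 \<le> x"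
  shows "(0 < Sup S \<and> Sup S < 1) \<longleftrightarrow> (0 < Sup T \<and> Sup T < 1)"
proof (cases "\<exists>p\<in>S. p > 0")
  case True
  then obtain p where p: "p \<in> S" "p > 0" by blast
  have pT: "p \<in> T" using p assms(3) by blast
  have "(\<lambda>z. \<forall>x\<in>S. x \<le> z) = (\<lambda>z. \<forall>x\<in>T. x \<le> z)"
  proof (rule ext, rule iffI)
    fix z assume h: "\<forall>x\<in>S. x \<le> z"
    show "\<forall>x\<in>T. x \<le> z"
    proof
      fix x assume "x \<in> T"
      thus "x \<le> z" using h p assms(3) by (cases "x = 0") force+
    qed
  next
    fix z assume h: "\<forall>x\<in>T. x \<le> z"
    show "\<forall>x\<in>S. x \<le> z"
    proof
      fix x assume "x \<in> S"
      thus "x \<le> z" using h pT p assms(3) by (cases "x = 0") force+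
    qed
  qed
  hence "Sup S = Sup T" unfolding Sup_real_def by simp
  thus ?thesis by simp
next
  case False
  hence "S \<subseteq> {0}" using assms(4) by force
  hence "S = {0}" using assms(1) by blast
  moreover have "T = {0}" using assms(2,3) \<open>S = {0}\<close> by blast
  ultimately show ?thesis by simp
qed

theorem lemma4p3:
  fixes A B :: "quat tensor" and n n3 :: nat
  assumes "0 < n" and "0 < n3"
  shows "(0 < rho_QT n n3 (qt_prod n n n3 A B) \<and> rho_QT n n3 (qt_prod n n n3 A B) < 1)
     \<longleftrightarrow> (0 < rho_QT n n3 (qt_prod n n n3 B A) \<and> rho_QT n n3 (qt_prod n n n3 B A) < 1)"
proof -
  define m where "m = n * n3"
  have m: "0 < m" using assms by (simp add: m_def)
  let ?M = "bcirc_z n n n3 A" and ?N = "bcirc_z n n n3 B"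
  have E1: "right_eigenvalue m (bcirc_z n n n3 (qt_prod n n n3 A B)) lam = right_eigenvalue m (mat_mult m ?M ?N) lam" for lam
    by (rule eig_cong) (simp add: MI assms m_def)
  have E2: "right_eigenvalue m (bcirc_z n n n3 (qt_prod n n n3 B A)) lam = right_eigenvalue m (mat_mult m ?N ?M) lam" for lam
    by (rule eig_cong) (simp add: MI assms m_def)
  define S where "S = qnorm ` {lam. right_eigenvalue m (mat_mult m ?M ?N) lam}"
  define T where "T = qnorm ` {lam. right_eigenvalue m (mat_mult m ?N ?M) lam}"
  have rS: "rho_QT n n3 (qt_prod n n n3 A B) = Sup S"
    unfolding rho_QT_def spec_radius_def S_def m_def[symmetric] E1 ..
  have rT: "rho_QT n n3 (qt_prod n n n3 B A) = Sup T"
    unfolding rho_QT_def spec_radius_def T_def m_def[symmetric] E2 ..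
  have q0: "qnorm 0 = 0" by (simp add: qnorm_def zero_quat_def)
  have ST: "S - {0} = T - {0}"
  proof
    show "S - {0} \<subseteq> T - {0}"
    proof
      fix x assume "x \<in> S - {0}"
      then obtain lam where "right_eigenvalue m (mat_mult m ?M ?N) lam" "x = qnorm lam" "x \<noteq> 0"
        unfolding S_def by blast
      moreover hence "lam \<noteq> 0" using q0 by auto
      ultimately show "x \<in> T - {0}" unfolding T_def using eig_swap by blast
    qed
    show "T - {0} \<subseteq> S - {0}"
    proof
      fix x assume "x \<in> T - {0}"
      then obtain lam where "right_eigenvalue m (mat_mult m ?N ?M) lam" "x = qnorm lam" "x \<noteq> 0"
        unfolding T_def by blast
      moreover hence "lam \<noteq> 0" using q0 by auto
      ultimately show "x \<in> S - {0}" unfolding S_def using eig_swap by blast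
    qed
  qed
  have Sne: "S \<noteq> {}" unfolding S_def using eig_exists[OF m] by blast
  have Tne: "T \<noteq> {}" unfolding T_def using eig_exists[OF m] by blast
  have nn: "\<forall>x\<in>S \<union> T. 0 \<le> x" unfolding S_def T_def by (auto simp: qnorm_def)
  show ?thesis unfolding rS rT by (rule sup_lemma[OF Sne Tne ST nn])
qed

end
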